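(* Let $\lambda$ be a well-behaved hypergraph width measure, $k$ an integer, $H$ a hypergraph with $\lambda\text{-}tw(H)\le k$, and $W\subseteq V(H)$. Then there exists a set $S\subseteq V(H)$ with $\lambda_H(S)\le k$ such that for every connected component $C$ of $\underline{H}\setminus S$ (viewed as a vertex set) we have $\lambda_H(W\cap C)\le\lambda_H(W)/2$.
   Context: A hypergraph $H$ has finite vertex set $V(H)$ and edge set $E(H)$ of subsets of $V(H)$; $||H||$ is the size of its encoding. The Gaifman graph $\underline{H}$ is the graph on $V(H)$ with two distinct vertices adjacent iff they lie in a common edge; $\underline{H}\setminus S$ is the graph obtained by deleting the vertices of $S$. A tree decomposition of $H$ is a tree $T$ with bags $B_t\subseteq V(H)$ such that nodes containing a given vertex form a connected subtree and every edge of $\underline{H}$ is inside some bag. A width measure $\lambda$ assigns to each hypergraph $H$ a real function $\lambda_H$ on subsets of $V(H)$; $\lambda\text{-}tw(H)$ is the minimum over tree decompositions of $\max_t\lambda_H(B_t)$. $\lambda$ is well-behaved if: (1) $\lambda_H(\{x\})\ge1$; (2) $\lambda_H(S\cup T)\le\lambda_H(S)+\lambda_H(T)$; (3) equality in (2) for disjoint $S,T$ with no edge of $\underline{H}$ between them; (4) $\lambda_F(S)\le\lambda_H(T)$ whenever $V(H)\subseteq V(F)$, $E(H)\subseteq E(F)$ and $S\subseteq T$; (5) $\lambda_H(S)\le k$ is decidable in time $||H||^{O(k)}$. *)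

theory Defs
  imports Complex_Main
begin

definition hypergraph :: "'a set \<Rightarrow> 'a set set \<Rightarrow> bool" where
  "hypergraph V E \<longleftrightarrow> finite V \<and> (\<forall>e\<in>E. e \<subseteq> V)"

definition gaifman_adj :: "'a set set \<Rightarrow> 'a \<Rightarrow> 'a \<Rightarrow> bool" where
  "gaifman_adj E u v \<longleftrightarrow> u \<noteq> v \<and> (\<exists>e\<in>E. u \<in> e \<and> v \<in> e)"

definition gaifman_components :: "'a set \<Rightarrow> 'a set set \<Rightarrow> 'a set \<Rightarrow> 'a set set" where
  "gaifman_components V E S =
     (let R = {(u, v). u \<in> V - S \<and> v \<in> V - S \<and> gaifman_adj E u v}
      in (\<lambda>u. {v \<in> V - S. (u, v) \<in> R\<^sup>*}) ` (V - S))"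

text \<open>A finite (nonempty) tree on node set N with symmetric edge relation ET:
  connected, and every edge is a bridge (i.e. acyclic).\<close>
definition is_tree :: "nat set \<Rightarrow> (nat \<times> nat) set \<Rightarrow> bool" where
  "is_tree N ET \<longleftrightarrow> finite N \<and> N \<noteq> {} \<and> ET \<subseteq> N \<times> N \<and> sym ET \<and> irrefl ET \<and>
     (\<forall>s\<in>N. \<forall>t\<in>N. (s, t) \<in> ET\<^sup>*) \<and>
     (\<forall>(s, t)\<in>ET. (s, t) \<notin> (ET - {(s, t), (t, s)})\<^sup>*)"

definition tree_decomposition ::
  "'a set \<Rightarrow> 'a set set \<Rightarrow> nat set \<Rightarrow> (nat \<times> nat) set \<Rightarrow> (nat \<Rightarrow> 'a set) \<Rightarrow> bool" where
  "tree_decomposition V E N ET B \<longleftrightarrow>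
     is_tree N ET \<and> (\<forall>t\<in>N. B t \<subseteq> V) \<and>
     (\<forall>x\<in>V. \<exists>t\<in>N. x \<in> B t) \<and>
     (\<forall>x\<in>V. let Nx = {t \<in> N. x \<in> B t} in
        \<forall>s\<in>Nx. \<forall>t\<in>Nx. (s, t) \<in> (ET \<inter> (Nx \<times> Nx))\<^sup>*) \<and>
     (\<forall>u\<in>V. \<forall>v\<in>V. gaifman_adj E u v \<longrightarrow> (\<exists>t\<in>N. u \<in> B t \<and> v \<in> B t))"

text \<open>A width measure: lam V E S is the value lambda_H(S) for H = (V,E).\<close>
type_synonym 'a width_measure = "'a set \<Rightarrow> 'a set set \<Rightarrow> 'a set \<Rightarrow> real"

definition lambda_tw :: "'a width_measure \<Rightarrow> 'a set \<Rightarrow> 'a set set \<Rightarrow> real" where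
  "lambda_tw lam V E =
     Inf {w. \<exists>N ET B. tree_decomposition V E N ET B \<and> w = Max ((\<lambda>t. lam V E (B t)) ` N)}"

text \<open>Well-behavedness, conditions (1)-(4). Condition (5) (algorithmic decidability
  in time ||H||^O(k)) is not formalized.\<close>
definition well_behaved :: "'a width_measure \<Rightarrow> bool" where
  "well_behaved lam \<longleftrightarrow>
     (\<forall>V E. hypergraph V E \<longrightarrow>
        (\<forall>x\<in>V. lam V E {x} \<ge> 1) \<and>
        (\<forall>S T. S \<subseteq> V \<longrightarrow> T \<subseteq> V \<longrightarrow> lam V E (S \<union> T) \<le> lam V E S + lam V E T) \<and>
        (\<forall>S T. S \<subseteq> V \<longrightarrow> T \<subseteq> V \<longrightarrow> S \<inter> T = {} \<longrightarrow>
            (\<forall>u\<in>S. \<forall>v\<in>T. \<not> gaifman_adj E u v) \<longrightarrow>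
            lam V E (S \<union> T) = lam V E S + lam V E T)) \<and>
     (\<forall>VH EH VF EF S T. hypergraph VH EH \<longrightarrow> hypergraph VF EF \<longrightarrow>
        VH \<subseteq> VF \<longrightarrow> EH \<subseteq> EF \<longrightarrow> S \<subseteq> T \<longrightarrow> T \<subseteq> VH \<longrightarrow>
        lam VF EF S \<le> lam VH EH T)"

end

theory Submission
  imports Defs
begin

lemma tree_facts:
  assumes "is_tree N ET"
  shows "finite N" "N \<noteq> {}" "ET \<subseteq> N \<times> N" "sym ET" "irrefl ET"
    "\<And>s t. s \<in> N \<Longrightarrow> t \<in> N \<Longrightarrow> (s, t) \<in> ET\<^sup>*"
    "\<And>s t. (s, t) \<in> ET \<Longrightarrow> (s, t) \<notin> (ET - {(s, t), (t, s)})\<^sup>*"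
  using assms unfolding is_tree_def by auto
lemma td_facts:
  assumes "tree_decomposition V E N ET B"
  shows "is_tree N ET" "\<And>t. t \<in> N \<Longrightarrow> B t \<subseteq> V" "\<And>x. x \<in> V \<Longrightarrow> \<exists>t\<in>N. x \<in> B t"
    "\<And>x s t. x \<in> V \<Longrightarrow> s \<in> N \<Longrightarrow> t \<in> N \<Longrightarrow> x \<in> B s \<Longrightarrow> x \<in> B t \<Longrightarrow>
       (s, t) \<in> (ET \<inter> ({t \<in> N. x \<in> B t} \<times> {t \<in> N. x \<in> B t}))\<^sup>*"
    "\<And>u v. u \<in> V \<Longrightarrow> v \<in> V \<Longrightarrow> gaifman_adj E u v \<Longrightarrow> (\<exists>t\<in>N. u \<in> B t \<and> v \<in> B t)"
proof -
  show "is_tree N ET" using assms unfolding tree_decomposition_def by (elim conjE)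
  show "\<And>t. t \<in> N \<Longrightarrow> B t \<subseteq> V" using assms unfolding tree_decomposition_def by (elim conjE) blast
  show "\<And>x. x \<in> V \<Longrightarrow> \<exists>t\<in>N. x \<in> B t" using assms unfolding tree_decomposition_def by (elim conjE) blast
  show "\<And>u v. u \<in> V \<Longrightarrow> v \<in> V \<Longrightarrow> gaifman_adj E u v \<Longrightarrow> (\<exists>t\<in>N. u \<in> B t \<and> v \<in> B t)"
    using assms unfolding tree_decomposition_def by (elim conjE) blast
  fix x s t assume h: "x \<in> V" "s \<in> N" "t \<in> N" "x \<in> B s" "x \<in> B t"
  have c: "\<forall>x\<in>V. let Nx = {t \<in> N. x \<in> B t} in
        \<forall>s\<in>Nx. \<forall>t\<in>Nx. (s, t) \<in> (ET \<inter> (Nx \<times> Nx))\<^sup>*"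
    using assms unfolding tree_decomposition_def by (elim conjE)
  have "let Nx = {t \<in> N. x \<in> B t} in \<forall>s\<in>Nx. \<forall>t\<in>Nx. (s, t) \<in> (ET \<inter> (Nx \<times> Nx))\<^sup>*"
    using bspec[OF c h(1)] .
  then show "(s, t) \<in> (ET \<inter> ({t \<in> N. x \<in> B t} \<times> {t \<in> N. x \<in> B t}))\<^sup>*"
    unfolding Let_def using h(2-5) by blast
qed


definition side :: "nat set \<Rightarrow> (nat \<times> nat) set \<Rightarrow> nat \<Rightarrow> nat \<Rightarrow> nat set" where
  "side N ET t s = {x \<in> N. (s, x) \<in> (ET - {(s, t), (t, s)})\<^sup>*}"

lemma sym_rt: "sym R \<Longrightarrow> (a,b) \<in> R\<^sup>* \<Longrightarrow> (b,a) \<in> R\<^sup>*"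
  by (metis sym_rtrancl symD)

lemma sym_minus: "sym ET \<Longrightarrow> sym (ET - {(s, t), (t, s)})"
  unfolding sym_def by auto

lemma bridge:
  assumes "is_tree N ET" "(t,s) \<in> ET"
  shows "(s,t) \<notin> (ET - {(s, t), (t, s)})\<^sup>*" "(t,s) \<notin> (ET - {(s, t), (t, s)})\<^sup>*"
proof -
  have b: "(t,s) \<notin> (ET - {(t, s), (s, t)})\<^sup>*" using tree_facts(7)[OF assms] .
  have e: "{(t, s), (s, t)} = {(s, t), (t, s)}" by (rule insert_commute)
  have sy: "sym (ET - {(s, t), (t, s)})" using sym_minus[OF tree_facts(4)[OF assms(1)]] .
  show "(t,s) \<notin> (ET - {(s, t), (t, s)})\<^sup>*" using b unfolding e .
  then show "(s,t) \<notin> (ET - {(s, t), (t, s)})\<^sup>*" using sym_rt[OF sy] by blast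
qed

lemma t_notin_side: "is_tree N ET \<Longrightarrow> (t,s) \<in> ET \<Longrightarrow> t \<notin> side N ET t s"
  using bridge(1) unfolding side_def by blast

lemma s_in_side: "is_tree N ET \<Longrightarrow> (t,s) \<in> ET \<Longrightarrow> s \<in> side N ET t s"
  using tree_facts(3) unfolding side_def by blast

lemma side_disjoint:
  assumes "is_tree N ET" "(t,s) \<in> ET"
  shows "side N ET t s \<inter> side N ET s t = {}"
proof (rule ccontr)
  assume "side N ET t s \<inter> side N ET s t \<noteq> {}"
  then obtain x where x: "(s,x) \<in> (ET - {(s, t), (t, s)})\<^sup>*" "(t,x) \<in> (ET - {(t, s), (s, t)})\<^sup>*"
    unfolding side_def by blast
  have e: "{(t, s), (s, t)} = {(s, t), (t, s)}" by (rule insert_commute)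
  have sy: "sym (ET - {(s, t), (t, s)})" using sym_minus[OF tree_facts(4)[OF assms(1)]] .
  have x2: "(t,x) \<in> (ET - {(s, t), (t, s)})\<^sup>*" using x(2) unfolding e .
  have "(x,t) \<in> (ET - {(s, t), (t, s)})\<^sup>*" using sym_rt[OF sy x2] .
  with x(1) have "(s,t) \<in> (ET - {(s, t), (t, s)})\<^sup>*" by simp
  with bridge[OF assms] show False by blast
qed

lemma side_cover:
  assumes "is_tree N ET" "t \<in> N" "x \<in> N" "x \<noteq> t"
  shows "\<exists>s. (t,s) \<in> ET \<and> x \<in> side N ET t s"
proof -
  have tr: "(t,x) \<in> ET\<^sup>*" using tree_facts(6)[OF assms(1)] assms(2,3) by blast
  have sub: "ET \<subseteq> N \<times> N" using tree_facts(3)[OF assms(1)] .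
  have "x = t \<or> (\<exists>s. (t,s) \<in> ET \<and> x \<in> side N ET t s)" using tr
  proof (induction rule: rtrancl_induct)
    case base then show ?case by simp
  next
    case (step y z)
    have zN: "z \<in> N" using step(2) sub by blast
    from step(3) show ?case
    proof
      assume "y = t"
      then have "(t,z) \<in> ET" using step(2) by simp
      moreover have "z \<in> side N ET t z" using zN unfolding side_def by blast
      ultimately show ?thesis by blast
    next
      assume "\<exists>s. (t,s) \<in> ET \<and> y \<in> side N ET t s"
      then obtain s where s: "(t,s) \<in> ET" "y \<in> side N ET t s" by blast
      have "y \<noteq> t" using t_notin_side[OF assms(1) s(1)] s(2) by blast
      show ?thesis
      proof (cases "(y,z) = (s,t)")
        case True then show ?thesis by simp
      next
        case False
        with \<open>y \<noteq> t\<close> have "(y,z) \<in> ET - {(s, t), (t, s)}" using step(2) by blast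
        moreover have "(s,y) \<in> (ET - {(s, t), (t, s)})\<^sup>*" using s(2) unfolding side_def by blast
        ultimately have "(s,z) \<in> (ET - {(s, t), (t, s)})\<^sup>*" by (meson rtrancl.rtrancl_into_rtrancl)
        then have "z \<in> side N ET t s" using zN unfolding side_def by blast
        then show ?thesis using s(1) by blast
      qed
    qed
  qed
  then show ?thesis using assms(4) by blast
qed

lemma side_sub:
  assumes "is_tree N ET" "(t,s) \<in> ET" "(s,r) \<in> ET" "r \<noteq> t"
  shows "side N ET s r \<subset> side N ET t s"
proof -
  have "s \<noteq> t" using tree_facts(5)[OF assms(1)] assms(2) unfolding irrefl_def by blast
  have nrs: "(r,s) \<notin> (ET - {(r, s), (s, r)})\<^sup>*" using bridge(1)[OF assms(1) assms(3)] .
  have ins: "(s,r) \<in> ET - {(s, t), (t, s)}" using assms(3,4) \<open>s \<noteq> t\<close> by blast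
  have "side N ET s r \<subseteq> side N ET t s"
  proof
    fix x assume "x \<in> side N ET s r"
    then have x: "x \<in> N" "(r,x) \<in> (ET - {(r, s), (s, r)})\<^sup>*" unfolding side_def by auto
    have "(r,x) \<in> (ET - {(s, t), (t, s)})\<^sup>*" using x(2)
    proof (induction rule: rtrancl_induct)
      case base then show ?case by simp
    next
      case (step y z)
      have "y \<noteq> s" using step(1) nrs by blast
      moreover have "z \<noteq> s" using step(1,2) nrs
        by (meson rtrancl.rtrancl_into_rtrancl)
      ultimately have "(y,z) \<in> ET - {(s, t), (t, s)}" using step(2) by blast
      then show ?case using step(3) by (meson rtrancl.rtrancl_into_rtrancl)
    qed
    then have "(s,x) \<in> (ET - {(s, t), (t, s)})\<^sup>*" using ins
      by (meson converse_rtrancl_into_rtrancl)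
    then show "x \<in> side N ET t s" using x(1) unfolding side_def by blast
  qed
  moreover have "s \<notin> side N ET s r" using t_notin_side[OF assms(1,3)] .
  moreover have "s \<in> side N ET t s" using s_in_side[OF assms(1,2)] .
  ultimately show ?thesis by blast
qed

lemma vertex_side:
  assumes "tree_decomposition V E N ET B" "c \<in> V" "c \<notin> B t" "(t,s) \<in> ET"
    "y \<in> side N ET t s" "c \<in> B y" "z \<in> N" "c \<in> B z"
  shows "z \<in> side N ET t s"
proof -
  let ?Nc = "{t \<in> N. c \<in> B t}"
  have tree: "is_tree N ET" using td_facts(1)[OF assms(1)] .
  have yN: "y \<in> N" using assms(5) unfolding side_def by blast
  have "(y,z) \<in> (ET \<inter> (?Nc \<times> ?Nc))\<^sup>*"
    using td_facts(4)[OF assms(1) assms(2) yN assms(7) assms(6) assms(8)] .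
  then show ?thesis
  proof (induction rule: rtrancl_induct)
    case base then show ?case using assms(5) .
  next
    case (step a b)
    have "a \<noteq> t" using t_notin_side[OF tree assms(4)] step(3) by blast
    moreover have "b \<noteq> t" using step(2) assms(3) by blast
    ultimately have "(a,b) \<in> ET - {(s, t), (t, s)}" using step(2) by blast
    moreover have "(s,a) \<in> (ET - {(s, t), (t, s)})\<^sup>*" using step(3) unfolding side_def by blast
    ultimately have "(s,b) \<in> (ET - {(s, t), (t, s)})\<^sup>*" by (meson rtrancl.rtrancl_into_rtrancl)
    moreover have "b \<in> N" using step(2) by blast
    ultimately show ?case unfolding side_def by blast
  qed
qed



lemma comp_facts:
  assumes "C \<in> gaifman_components V E S"
  shows "\<exists>u. u \<in> C \<and> C \<subseteq> V - S \<and>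
     (\<forall>c\<in>C. (u,c) \<in> {(u, v). u \<in> V - S \<and> v \<in> V - S \<and> gaifman_adj E u v}\<^sup>*)"
  using assms unfolding gaifman_components_def Let_def by auto

lemma adj_bag:
  assumes "tree_decomposition V E N ET B" "a \<in> V" "b \<in> V" "gaifman_adj E a b"
  shows "\<exists>z\<in>N. a \<in> B z \<and> b \<in> B z"
  using td_facts(5)[OF assms(1)] assms(2-4) by blast

lemma comp_side:
  assumes td: "tree_decomposition V E N ET B" and C: "C \<in> gaifman_components V E (B t)"
    and ts: "(t,s) \<in> ET" and c0: "c0 \<in> C" "z0 \<in> N" "c0 \<in> B z0" "z0 \<in> side N ET t s"
  shows "\<forall>c\<in>C. \<forall>z\<in>N. c \<in> B z \<longrightarrow> z \<in> side N ET t s"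
proof -
  let ?R = "{(u, v). u \<in> V - B t \<and> v \<in> V - B t \<and> gaifman_adj E u v}"
  obtain u where u: "u \<in> C" "C \<subseteq> V - B t" "\<forall>c\<in>C. (u,c) \<in> ?R\<^sup>*"
    using comp_facts[OF C] by blast
  define P where "P c = (\<exists>z\<in>N. c \<in> B z \<and> z \<in> side N ET t s)" for c
  have all: "\<forall>z\<in>N. c \<in> B z \<longrightarrow> z \<in> side N ET t s" if "c \<in> V - B t" "P c" for c
    using that vertex_side[OF td _ _ ts] unfolding P_def by blast
  have edge: "P a \<Longrightarrow> P b" if "(a,b) \<in> ?R" for a b
  proof -
    assume Pa: "P a"
    from that have ab: "a \<in> V - B t" "b \<in> V - B t" "gaifman_adj E a b" by auto
    obtain z where z: "z \<in> N" "a \<in> B z" "b \<in> B z" using adj_bag[OF td] ab by blast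
    have "z \<in> side N ET t s" using all[OF ab(1) Pa] z by blast
    then show "P b" using z unfolding P_def by blast
  qed
  have symR: "(b,a) \<in> ?R" if "(a,b) \<in> ?R" for a b
    using that unfolding gaifman_adj_def by auto
  have eq: "P u = P c" if "(u,c) \<in> ?R\<^sup>*" for c
    using that
  proof (induction rule: rtrancl_induct)
    case base then show ?case by simp
  next
    case (step y z)
    then show ?case using edge symR by blast
  qed
  have "P c0" using c0 unfolding P_def by blast
  then have "P u" using eq u(3) c0(1) by blast
  then show ?thesis using eq u(2,3) all by blast
qed

lemma comp_exists_side:
  assumes td: "tree_decomposition V E N ET B" and C: "C \<in> gaifman_components V E (B t)"
    and tN: "t \<in> N"
  shows "\<exists>s. (t,s) \<in> ET \<and> (\<forall>c\<in>C. \<forall>z\<in>N. c \<in> B z \<longrightarrow> z \<in> side N ET t s)"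
proof -
  obtain u where u: "u \<in> C" "C \<subseteq> V - B t" using comp_facts[OF C] by blast
  obtain y where y: "y \<in> N" "u \<in> B y" using td_facts(3)[OF td] u by blast
  have "y \<noteq> t" using u y by blast
  have tree: "is_tree N ET" using td_facts(1)[OF td] .
  obtain s where s: "(t,s) \<in> ET" "y \<in> side N ET t s"
    using side_cover[OF tree tN y(1) \<open>y \<noteq> t\<close>] by blast
  show ?thesis using comp_side[OF td C s(1) u(1) y s(2)] s(1) by blast
qed

lemma finite_side: "is_tree N ET \<Longrightarrow> finite (side N ET t s)"
  using tree_facts(1) unfolding side_def by auto


lemma wb_add:
  assumes "well_behaved lam" "hypergraph V E" "S \<subseteq> V" "T \<subseteq> V" "S \<inter> T = {}"
    "\<forall>u\<in>S. \<forall>v\<in>T. \<not> gaifman_adj E u v"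
  shows "lam V E (S \<union> T) = lam V E S + lam V E T"
proof -
  have "\<forall>V E. hypergraph V E \<longrightarrow>
        (\<forall>S T. S \<subseteq> V \<longrightarrow> T \<subseteq> V \<longrightarrow> S \<inter> T = {} \<longrightarrow>
            (\<forall>u\<in>S. \<forall>v\<in>T. \<not> gaifman_adj E u v) \<longrightarrow>
            lam V E (S \<union> T) = lam V E S + lam V E T)"
    using assms(1) unfolding well_behaved_def by blast
  then show ?thesis using assms(2-6) by blast
qed

lemma wb_mono:
  assumes "well_behaved lam" "hypergraph V E" "S \<subseteq> T" "T \<subseteq> V"
  shows "lam V E S \<le> lam V E T"
proof -
  have "\<forall>VH EH VF EF S T. hypergraph VH EH \<longrightarrow> hypergraph VF EF \<longrightarrow>
        VH \<subseteq> VF \<longrightarrow> EH \<subseteq> EF \<longrightarrow> S \<subseteq> T \<longrightarrow> T \<subseteq> VH \<longrightarrow>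
        lam VF EF S \<le> lam VH EH T" using assms(1) unfolding well_behaved_def by (elim conjE)
  then show ?thesis using assms(2-4) by blast
qed

lemma decomp_exists:
  assumes "hypergraph V E" "lambda_tw lam V E \<le> real_of_int k"
  shows "\<exists>N ET B. tree_decomposition V E N ET B \<and> (\<forall>t\<in>N. lam V E (B t) \<le> real_of_int k)"
proof -
  define A where "A = {w. \<exists>N ET B. tree_decomposition V E N ET B \<and> w = Max ((\<lambda>t. lam V E (B t)) ` N)}"
  have finV: "finite V" using assms(1) unfolding hypergraph_def by blast
  have Asub: "A \<subseteq> (lam V E) ` Pow V"
  proof
    fix w assume "w \<in> A"
    then obtain N ET B where td: "tree_decomposition V E N ET B" and w: "w = Max ((\<lambda>t. lam V E (B t)) ` N)"
      unfolding A_def by blast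
    have "finite N" "N \<noteq> {}" using tree_facts(1,2)[OF td_facts(1)[OF td]] by auto
    then have "w \<in> (\<lambda>t. lam V E (B t)) ` N" using w Max_in by blast
    then show "w \<in> (lam V E) ` Pow V" using td_facts(2)[OF td] by blast
  qed
  have finA: "finite A" using Asub finV finite_subset by blast
  have tr: "is_tree {0} {}" unfolding is_tree_def by (auto simp: sym_def irrefl_def)
  have tdtriv: "tree_decomposition V E {0} {} (\<lambda>_. V)"
    unfolding tree_decomposition_def Let_def using tr by auto
  have "Max ((\<lambda>t. lam V E ((\<lambda>_. V) t)) ` {0}) \<in> A" unfolding A_def mem_Collect_eq
    by (rule exI[of _ "{0}"], rule exI[of _ "{}"], rule exI[of _ "\<lambda>_. V"]) (simp add: tdtriv)
  then have "A \<noteq> {}" by blast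
  then have "Min A \<in> A" using finA Min_in by blast
  moreover have "Inf A = Min A" using finA \<open>A \<noteq> {}\<close> cInf_eq_Min by blast
  moreover have "Inf A \<le> real_of_int k" using assms(2) unfolding lambda_tw_def A_def by simp
  ultimately have "Inf A \<in> A" "Inf A \<le> real_of_int k" by auto
  then obtain N ET B where td: "tree_decomposition V E N ET B"
     and wd: "Max ((\<lambda>t. lam V E (B t)) ` N) \<le> real_of_int k"
    unfolding A_def by auto
  have finN: "finite N" using tree_facts(1)[OF td_facts(1)[OF td]] .
  have "\<forall>t\<in>N. lam V E (B t) \<le> real_of_int k"
  proof
    fix t assume "t \<in> N"
    then have "lam V E (B t) \<le> Max ((\<lambda>t. lam V E (B t)) ` N)" using finN by simp
    then show "lam V E (B t) \<le> real_of_int k" using wd by linarith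
  qed
  then show ?thesis using td by blast
qed

theorem mainTheorem19:
  fixes lam :: "'a width_measure" and k :: int and V :: "'a set" and E :: "'a set set"
    and W :: "'a set"
  assumes "well_behaved lam"
    and "hypergraph V E"
    and "lambda_tw lam V E \<le> real_of_int k"
    and "W \<subseteq> V"
  shows "\<exists>S \<subseteq> V. lam V E S \<le> real_of_int k \<and>
           (\<forall>C \<in> gaifman_components V E S. lam V E (W \<inter> C) \<le> lam V E W / 2)"
proof -
  have wb: "\<And>S T. S \<subseteq> V \<Longrightarrow> T \<subseteq> V \<Longrightarrow> S \<inter> T = {} \<Longrightarrow>
            (\<forall>u\<in>S. \<forall>v\<in>T. \<not> gaifman_adj E u v) \<Longrightarrow>
            lam V E (S \<union> T) = lam V E S + lam V E T"
    using wb_add[OF assms(1,2)] by blast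
  have mono: "\<And>S T. S \<subseteq> T \<Longrightarrow> T \<subseteq> V \<Longrightarrow> lam V E S \<le> lam V E T"
    using wb_mono[OF assms(1,2)] by blast
  obtain N ET B where td: "tree_decomposition V E N ET B"
     and bagk: "\<forall>t\<in>N. lam V E (B t) \<le> real_of_int k"
    using decomp_exists[OF assms(2,3)] by blast
  have tree: "is_tree N ET" using td_facts(1)[OF td] .
  have finN: "finite N" and NE: "N \<noteq> {}" and ETN: "ET \<subseteq> N \<times> N" using tree_facts[OF tree] by auto
  have bagV: "B t \<subseteq> V" if "t \<in> N" for t using td_facts(2)[OF td] that by blast
  define bal where "bal t = (\<forall>C \<in> gaifman_components V E (B t). lam V E (W \<inter> C) \<le> lam V E W / 2)" for t
  have step: "\<forall>t s C. card (side N ET t s) = n \<longrightarrow> (t,s) \<in> ET \<longrightarrow> C \<in> gaifman_components V E (B t) \<longrightarrow>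
     lam V E (W \<inter> C) > lam V E W / 2 \<longrightarrow> (\<forall>c\<in>C. \<forall>z\<in>N. c \<in> B z \<longrightarrow> z \<in> side N ET t s) \<longrightarrow>
     (\<exists>x\<in>N. bal x)" for n
  proof (induction n rule: less_induct)
    case (less n)
    show ?case
    proof (intro allI impI)
      fix t s C
      assume n: "card (side N ET t s) = n" and ts: "(t,s) \<in> ET"
        and C: "C \<in> gaifman_components V E (B t)" and Cbig: "lam V E (W \<inter> C) > lam V E W / 2"
        and Cside: "\<forall>c\<in>C. \<forall>z\<in>N. c \<in> B z \<longrightarrow> z \<in> side N ET t s"
      have sN: "s \<in> N" using ts ETN by blast
      show "\<exists>x\<in>N. bal x"
      proof (cases "bal s")
        case True then show ?thesis using sN by blast
      next
        case False
        then obtain D where D: "D \<in> gaifman_components V E (B s)"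
          and Dbig: "lam V E (W \<inter> D) > lam V E W / 2" unfolding bal_def by force
        obtain r where sr: "(s,r) \<in> ET" and Dside: "\<forall>c\<in>D. \<forall>z\<in>N. c \<in> B z \<longrightarrow> z \<in> side N ET s r"
          using comp_exists_side[OF td D sN] by blast
        show ?thesis
        proof (cases "r = t")
          case True
          have disj: "side N ET t s \<inter> side N ET s t = {}" using side_disjoint[OF tree ts] .
          have CV: "C \<subseteq> V" using comp_facts[OF C] by blast
          have DV: "D \<subseteq> V" using comp_facts[OF D] by blast
          have CD: "C \<inter> D = {}"
          proof (rule ccontr)
            assume "C \<inter> D \<noteq> {}"
            then obtain c where c: "c \<in> C" "c \<in> D" by blast
            obtain z where z: "z \<in> N" "c \<in> B z" using td_facts(3)[OF td] c CV by blast
            have "z \<in> side N ET t s" using Cside c(1) z by blast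
            moreover have "z \<in> side N ET s t" using Dside c(2) z unfolding True by blast
            ultimately show False using disj by blast
          qed
          have nadj: "\<forall>u\<in>W \<inter> C. \<forall>v\<in>W \<inter> D. \<not> gaifman_adj E u v"
          proof (intro ballI notI)
            fix u v assume uv: "u \<in> W \<inter> C" "v \<in> W \<inter> D" "gaifman_adj E u v"
            have "u \<in> V" "v \<in> V" using uv CV DV by auto
            then obtain z where z: "z \<in> N" "u \<in> B z" "v \<in> B z" using adj_bag[OF td _ _ uv(3)] by blast
            have "z \<in> side N ET t s" using Cside uv(1) z by blast
            moreover have "z \<in> side N ET s t" using Dside uv(2) z unfolding True by blast
            ultimately show False using disj by blast
          qed
          have "lam V E ((W \<inter> C) \<union> (W \<inter> D)) = lam V E (W \<inter> C) + lam V E (W \<inter> D)"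
          proof (rule wb)
            show "W \<inter> C \<subseteq> V" "W \<inter> D \<subseteq> V" using CV DV by auto
            show "W \<inter> C \<inter> (W \<inter> D) = {}" using CD by auto
            show "\<forall>u\<in>W \<inter> C. \<forall>v\<in>W \<inter> D. \<not> gaifman_adj E u v" using nadj .
          qed
          moreover have "lam V E ((W \<inter> C) \<union> (W \<inter> D)) \<le> lam V E W" by (rule mono[OF _ assms(4)]) blast
          ultimately show ?thesis using Cbig Dbig by linarith
        next
          case False
          have "side N ET s r \<subset> side N ET t s" using side_sub[OF tree ts sr False] .
          then have "card (side N ET s r) < n" using n psubset_card_mono[OF finite_side[OF tree]] by metis
          then show ?thesis using less[of "card (side N ET s r)", rule_format, of s r D] sr D Dbig Dside by blast
        qed
      qed
    qed
  qed
  have "\<exists>x\<in>N. bal x"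
  proof -
    obtain t0 where t0: "t0 \<in> N" using NE by blast
    show ?thesis
    proof (cases "bal t0")
      case True then show ?thesis using t0 by blast
    next
      case False
      then obtain C where C: "C \<in> gaifman_components V E (B t0)"
        and Cbig: "lam V E (W \<inter> C) > lam V E W / 2" unfolding bal_def by force
      obtain s where "(t0,s) \<in> ET" "\<forall>c\<in>C. \<forall>z\<in>N. c \<in> B z \<longrightarrow> z \<in> side N ET t0 s"
        using comp_exists_side[OF td C t0] by blast
      then show ?thesis using step[of "card (side N ET t0 s)", rule_format, of t0 s C] C Cbig by blast
    qed
  qed
  then obtain x where "x \<in> N" "bal x" by blast
  then show ?thesis using bagk bagV unfolding bal_def by blast
qed

end
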